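(* Let $\Phi$ be real analytic on an open set $U\subset\mathbb R^N$, let $\mathbf z_0\in U$, and let $c>0$, $\delta\in(0,1]$, $\mu\in[1/2,1)$ be such that $\overline{B_\delta(\mathbf z_0)}\subset U$ and $$\|\nabla\Phi(\mathbf z)\|\ge c|\Phi(\mathbf z)-\Phi(\mathbf z_0)|^\mu\quad\text{for all }\mathbf z\text{ with }\|\mathbf z-\mathbf z_0\|\le\delta.$$ Let $\mathbf E:[0,\infty)\to\mathbb R^N$ be continuous with $\|\mathbf E(t)\|\le C_1e^{-c_1t}$ for some $C_1,c_1>0$, and let $\mathbf z$ be a $C^1$ solution of $\dot{\mathbf z}=-\nabla\Phi(\mathbf z)+\mathbf E(t)$. Set $$H(t)=\Phi(\mathbf z(t))+\tfrac34\int_t^\infty\|\mathbf E(s)\|^2ds,\qquad \tilde E(t)=c\Big(\tfrac34\int_t^\infty\|\mathbf E(s)\|^2ds\Big)^\mu+\|\mathbf E(t)\|.$$ If $\mathbf z(t)\in B_\delta(\mathbf z_0)$ for all $t\in[t',t'']$, then $$\int_{t'}^{t''}\|\dot{\mathbf z}(s)\|ds\le 4\int_{H(t'')}^{H(t')}\frac{d\xi}{c|\xi-\Phi(\mathbf z_0)|^\mu}+\int_{t'}^{t''}\tilde E(s)\,ds .$$ (Here $\tilde E$ decays exponentially.)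
   Context: $\|\cdot\|$ is the Euclidean norm on $\mathbb R^N$ and $B_\delta(\mathbf z_0)=\{\mathbf z:\|\mathbf z-\mathbf z_0\|<\delta\}$. *)

theory Defs
  imports "HOL-Analysis.Analysis"
begin

text \<open>Real analyticity on an open set of R^N (N = CARD('n)): near every point the function
  is the sum of an (unconditionally, i.e. absolutely) convergent multivariate power series,
  indexed by multi-indices \<alpha> :: 'n \<Rightarrow> nat.\<close>
definition real_analytic_on :: "(real^'n \<Rightarrow> real) \<Rightarrow> (real^'n) set \<Rightarrow> bool" where
  "real_analytic_on f U \<longleftrightarrow>
     (\<forall>x\<in>U. \<exists>r>0. \<exists>a :: ('n \<Rightarrow> nat) \<Rightarrow> real.
        \<forall>y\<in>ball x r. ((\<lambda>\<alpha>. a \<alpha> * (\<Prod>i\<in>UNIV. (y$i - x$i) ^ \<alpha> i)) has_sum f y) UNIV)"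

definition gradient :: "(real^'n \<Rightarrow> real) \<Rightarrow> real^'n \<Rightarrow> real^'n" where
  "gradient f z = (\<chi> i. frechet_derivative f (at z) (axis i 1))"

end

theory Submission
  imports Defs
begin


definition ee :: "'n \<Rightarrow> ('n \<Rightarrow> nat)" where "ee i = (\<lambda>j. if j = i then 1 else 0)"

lemma deg0: fixes \<alpha> :: "'n::finite \<Rightarrow> nat" assumes "sum \<alpha> UNIV = 0" shows "\<alpha> = (\<lambda>_. 0)"
proof -
  have "\<forall>i\<in>UNIV. \<alpha> i = 0" using assms sum_eq_0_iff[of "UNIV :: 'n set" \<alpha>] by simp
  thus ?thesis by (intro ext) simp
qed

lemma deg1: fixes \<alpha> :: "'n::finite \<Rightarrow> nat" assumes "sum \<alpha> UNIV = 1" shows "\<exists>i. \<alpha> = ee i"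
proof -
  have "\<exists>i. \<alpha> i \<noteq> 0"
  proof (rule ccontr)
    assume "\<not> (\<exists>i. \<alpha> i \<noteq> 0)"
    hence "\<alpha> = (\<lambda>_. 0)" by (intro ext) simp
    with assms show False by simp
  qed
  then obtain i where i: "\<alpha> i \<noteq> 0" ..
  have s: "sum \<alpha> UNIV = \<alpha> i + sum \<alpha> (UNIV - {i})"
    by (simp add: sum.remove)
  hence a1: "\<alpha> i = 1" and a2: "sum \<alpha> (UNIV - {i}) = 0" using assms i by linarith+
  have a3: "\<forall>j\<in>UNIV - {i}. \<alpha> j = 0" using a2 sum_eq_0_iff[of "UNIV - {i}" \<alpha>] by simp
  have "\<alpha> = ee i"
  proof (rule ext)
    fix j show "\<alpha> j = ee i j" using a1 a3 unfolding ee_def by (cases "j = i") simp_all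
  qed
  thus ?thesis by blast
qed

lemma ee_inj: "inj (ee :: 'n \<Rightarrow> _)"
  unfolding inj_def ee_def fun_eq_iff by (metis zero_neq_one)

lemma ee_nz: "ee i \<noteq> (\<lambda>_. 0)" unfolding ee_def fun_eq_iff by auto

lemma prod_ee: fixes h :: "real^'n" shows "(\<Prod>j\<in>UNIV. (h$j) ^ ee i j) = h$i"
proof -
  have "(\<Prod>j\<in>UNIV. (h$j) ^ ee i j) = (h$i)^ee i i * (\<Prod>j\<in>UNIV-{i}. (h$j) ^ ee i j)"
    by (simp add: prod.remove)
  also have "(\<Prod>j\<in>UNIV-{i}. (h$j) ^ ee i j) = 1" by (intro prod.neutral) (auto simp: ee_def)
  finally show ?thesis by (simp add: ee_def)
qed

lemma analytic_differentiable:
  fixes f :: "real^'n \<Rightarrow> real"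
  assumes "real_analytic_on f U" "x \<in> U"
  shows "f differentiable (at x)"
proof -
  obtain r a where r: "r > 0" and hs: "\<And>y. y \<in> ball x r \<Longrightarrow>
     ((\<lambda>\<alpha>. a \<alpha> * (\<Prod>i\<in>UNIV. (y$i - x$i) ^ \<alpha> i)) has_sum f y) UNIV"
    using assms unfolding real_analytic_on_def by blast
  define N where "N = real CARD('n)"
  have N: "N \<ge> 1" unfolding N_def by simp
  define \<rho> where "\<rho> = r / (2*N)"
  have \<rho>: "\<rho> > 0" "\<rho> < r" using r N unfolding \<rho>_def by (auto simp: field_simps)
  define p where "p = x + (\<chi> i. \<rho>)"
  have "norm (p - x) \<le> (\<Sum>i\<in>UNIV. \<bar>(p - x)$i\<bar>)" by (rule norm_le_l1_cart)
  also have "\<dots> = N * \<rho>" using \<rho> by (simp add: p_def N_def)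
  also have "\<dots> < r" using r N unfolding \<rho>_def by (auto simp: field_simps)
  finally have "p \<in> ball x r" by (simp add: dist_norm norm_minus_commute)
  from hs[OF this] have "((\<lambda>\<alpha>. a \<alpha> * \<rho> ^ sum \<alpha> UNIV) has_sum f p) UNIV"
  proof (rule has_sum_cong[THEN iffD1, rotated])
    fix \<alpha> :: "'n \<Rightarrow> nat"
    have "(\<Prod>i\<in>UNIV. (p$i - x$i) ^ \<alpha> i) = (\<Prod>i\<in>UNIV. \<rho> ^ \<alpha> i)"
      by (intro prod.cong) (auto simp: p_def)
    also have "\<dots> = \<rho> ^ sum \<alpha> UNIV" by (rule power_sum[symmetric])
    finally show "a \<alpha> * (\<Prod>i\<in>UNIV. (p$i - x$i) ^ \<alpha> i) = a \<alpha> * \<rho> ^ sum \<alpha> UNIV" by simp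
  qed
  hence "(\<lambda>\<alpha>. a \<alpha> * \<rho> ^ sum \<alpha> UNIV) summable_on UNIV"
    by (rule has_sum_imp_summable)
  hence sa: "(\<lambda>\<alpha>. \<bar>a \<alpha>\<bar> * \<rho> ^ sum \<alpha> UNIV) summable_on UNIV"
  proof -
    from \<open>_ summable_on UNIV\<close> have "(\<lambda>\<alpha>. norm (a \<alpha> * \<rho> ^ sum \<alpha> UNIV)) summable_on UNIV"
      by (rule summable_on_iff_abs_summable_on_real[THEN iffD1])
    then show ?thesis
      by (rule summable_on_cong[THEN iffD1, rotated]) (use \<rho> in \<open>simp add: abs_mult\<close>)
  qed
  define F where "F = insert (\<lambda>_. 0) (range (ee :: 'n \<Rightarrow> _))"
  have finF: "finite F" unfolding F_def by simp
  define A' where "A' = UNIV - F"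
  have degA: "sum \<alpha> UNIV \<ge> 2" if "\<alpha> \<in> A'" for \<alpha> :: "'n \<Rightarrow> nat"
  proof (rule ccontr)
    assume "\<not> ?thesis"
    hence "sum \<alpha> UNIV = 0 \<or> sum \<alpha> UNIV = 1" by linarith
    thus False using that deg0[of \<alpha>] deg1[of \<alpha>] unfolding A'_def F_def by auto
  qed
  define B where "B = infsum (\<lambda>\<alpha>. \<bar>a \<alpha>\<bar> * \<rho> ^ sum \<alpha> UNIV) A'"
  have hB: "((\<lambda>\<alpha>. \<bar>a \<alpha>\<bar> * \<rho> ^ sum \<alpha> UNIV) has_sum B) A'"
    unfolding B_def by (rule has_sum_infsum, rule summable_on_subset_banach[OF sa]) auto
  have B0: "B \<ge> 0" unfolding B_def using \<rho> by (intro infsum_nonneg) auto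
  define L where "L h = (\<Sum>i\<in>UNIV. a (ee i) * h$i)" for h :: "real^'n"
  have bl: "bounded_linear L" unfolding L_def
    by (intro bounded_linear_sum bounded_linear_const_mult bounded_linear_vec_nth)
  have key: "\<bar>f y - a (\<lambda>_. 0) - L (y - x)\<bar> \<le> B / \<rho>^2 * (norm (y - x))^2"
    if y: "norm (y - x) \<le> \<rho>" for y
  proof -
    let ?t = "\<lambda>\<alpha>. a \<alpha> * (\<Prod>i\<in>UNIV. (y$i - x$i) ^ \<alpha> i)"
    have "y \<in> ball x r" using y \<rho> by (simp add: dist_norm norm_minus_commute)
    from hs[OF this] have h1: "(?t has_sum f y) UNIV" .
    have h2: "(?t has_sum sum ?t F) F" using finF by simp
    have sF: "sum ?t F = a (\<lambda>_. 0) + L (y - x)"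
    proof -
      have "sum ?t F = ?t (\<lambda>_. 0) + sum ?t (range ee)"
        unfolding F_def by (subst sum.insert) (auto, metis ee_nz)
      also have "sum ?t (range ee) = (\<Sum>i\<in>UNIV. ?t (ee i))"
        by (subst sum.reindex) (auto simp: ee_inj)
      also have "\<dots> = L (y - x)" unfolding L_def
        using prod_ee[of "y - x"] by simp
      finally show ?thesis by simp
    qed
    have h3: "(?t has_sum (f y - a (\<lambda>_. 0) - L (y - x))) A'"
      using has_sum_Diff[OF h1 h2] sF unfolding A'_def by (simp add: algebra_simps)
    define s where "s = norm (y - x) / \<rho>"
    have s: "0 \<le> s" "s \<le> 1" using y \<rho> unfolding s_def by auto
    have bnd: "\<bar>?t \<alpha>\<bar> \<le> s^2 * (\<bar>a \<alpha>\<bar> * \<rho> ^ sum \<alpha> UNIV)" if "\<alpha> \<in> A'" for \<alpha>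
    proof -
      have "\<bar>\<Prod>i\<in>UNIV. (y$i - x$i) ^ \<alpha> i\<bar> = (\<Prod>i\<in>UNIV. \<bar>(y - x)$i\<bar> ^ \<alpha> i)"
        by (simp add: abs_prod power_abs)
      also have "\<dots> \<le> (\<Prod>i\<in>UNIV. norm (y - x) ^ \<alpha> i)"
        by (intro prod_mono conjI power_mono component_le_norm_cart) auto
      also have "\<dots> = norm (y - x) ^ sum \<alpha> UNIV" by (simp add: power_sum)
      also have "\<dots> = \<rho> ^ sum \<alpha> UNIV * s ^ sum \<alpha> UNIV" 
        using \<rho> by (simp add: s_def power_divide)
      also have "\<dots> \<le> \<rho> ^ sum \<alpha> UNIV * s^2"
        using s degA[OF that] \<rho> by (intro mult_left_mono power_decreasing) auto
      finally have P: "\<bar>\<Prod>i\<in>UNIV. (y$i - x$i) ^ \<alpha> i\<bar> \<le> \<rho> ^ sum \<alpha> UNIV * s^2" .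
      have "\<bar>a \<alpha>\<bar> * \<bar>\<Prod>i\<in>UNIV. (y$i - x$i) ^ \<alpha> i\<bar> \<le> \<bar>a \<alpha>\<bar> * (\<rho> ^ sum \<alpha> UNIV * s^2)"
        by (rule mult_left_mono[OF P]) simp
      thus ?thesis by (simp only: abs_mult mult_ac)
    qed
    have "f y - a (\<lambda>_. 0) - L (y - x) \<le> s^2 * B"
      by (rule has_sum_mono[OF h3 has_sum_cmult_right[OF hB]]) (metis bnd abs_le_D1)
    moreover have "(-1) * (f y - a (\<lambda>_. 0) - L (y - x)) \<le> s^2 * B"
      by (rule has_sum_mono[OF has_sum_cmult_right[OF h3] has_sum_cmult_right[OF hB]]) (simp only: mult_minus1, metis bnd abs_le_D2)
    ultimately have "\<bar>f y - a (\<lambda>_. 0) - L (y - x)\<bar> \<le> s^2 * B" by (simp add: abs_le_iff)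
    thus ?thesis unfolding s_def by (simp add: power_divide field_simps)
  qed
  have fx: "f x = a (\<lambda>_. 0)" using key[of x] \<rho> bl by (simp add: linear_simps)
  have "(f has_derivative L) (at x)"
    unfolding has_derivative_at_alt
  proof (intro conjI bl allI impI)
    fix e :: real assume e: "e > 0"
    define d where "d = min \<rho> (e * \<rho>^2 / (B + 1))"
    have d: "d > 0" using e \<rho> B0 unfolding d_def by auto
    show "\<exists>d>0. \<forall>y. norm (y - x) < d \<longrightarrow> norm (f y - f x - L (y - x)) \<le> e * norm (y - x)"
    proof (rule exI[of _ d], intro conjI allI impI)
      show "0 < d" by (rule d)
    next
      fix y assume y: "norm (y - x) < d"
      hence y1: "norm (y - x) \<le> \<rho>" unfolding d_def by auto
      have "B / \<rho>^2 * norm (y - x) \<le> e"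
      proof -
        have "B / \<rho>^2 * norm (y - x) \<le> B / \<rho>^2 * (e * \<rho>^2 / (B + 1))"
          using y B0 \<rho> unfolding d_def by (intro mult_left_mono) auto
        also have "\<dots> = e * (B / (B+1))" using \<rho> B0 by (simp add: field_simps)
        also have "\<dots> \<le> e * 1" using e B0 by (intro mult_left_mono) auto
        finally show ?thesis by simp
      qed
      hence "B / \<rho>^2 * (norm (y - x))^2 \<le> e * norm (y - x)"
      proof -
        assume h: "B / \<rho>^2 * norm (y - x) \<le> e"
        have "B / \<rho>^2 * (norm (y - x))^2 = (B / \<rho>^2 * norm (y - x)) * norm (y - x)"
          by (simp add: power2_eq_square)
        also have "\<dots> \<le> e * norm (y - x)" by (rule mult_right_mono[OF h]) simp
        finally show ?thesis .
      qed
      with key[OF y1] show "norm (f y - f x - L (y - x)) \<le> e * norm (y - x)"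
        by (simp only: fx real_norm_def)
    qed
  qed
  thus ?thesis by (rule differentiableI)
qed



lemma powr_subadd:
  fixes x y m :: real
  assumes "0 \<le> x" "0 \<le> y" "0 < m" "m \<le> 1"
  shows "(x + y) powr m \<le> x powr m + y powr m"
proof (cases "x + y = 0")
  case True
  hence "x = 0" "y = 0" using assms by auto
  thus ?thesis by simp
next
  case False
  define s where "s = x + y"
  have s: "s > 0" using False assms unfolding s_def by auto
  have ax: "x / s \<le> (x / s) powr m"
  proof -
    have "0 \<le> x / s" using assms s by simp
    moreover have "x / s \<le> 1" using assms s by (simp add: s_def divide_le_eq)
    ultimately have "(x / s) powr 1 \<le> (x / s) powr m" using powr_mono'[of m 1 "x/s"] assms by simp
    thus ?thesis using assms s by simp
  qed
  have ay: "y / s \<le> (y / s) powr m"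
  proof -
    have "0 \<le> y / s" using assms s by simp
    moreover have "y / s \<le> 1" using assms s by (simp add: s_def divide_le_eq)
    ultimately have "(y / s) powr 1 \<le> (y / s) powr m" using powr_mono'[of m 1 "y/s"] assms by simp
    thus ?thesis using assms s by simp
  qed
  have "1 = x / s + y / s" using s by (simp add: add_divide_distrib[symmetric] s_def)
  also have "\<dots> \<le> (x / s) powr m + (y / s) powr m" using ax ay by linarith
  also have "\<dots> = (x powr m + y powr m) / s powr m"
    using assms s by (simp add: powr_divide add_divide_distrib)
  finally have "s powr m \<le> x powr m + y powr m" using s by (simp add: field_simps)
  thus ?thesis unfolding s_def .
qed

definition psi :: "real \<Rightarrow> real \<Rightarrow> real \<Rightarrow> real" where
  "psi c m x = (if x \<ge> 0 then x powr (1 - m) else - ((- x) powr (1 - m))) / (c * (1 - m))"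

lemma psi_deriv:
  assumes "c > 0" "m < 1" "x \<noteq> 0"
  shows "(psi c m has_real_derivative 1 / (c * \<bar>x\<bar> powr m)) (at x)"
proof (cases "x > 0")
  case True
  have d: "((\<lambda>y. y powr (1 - m) / (c * (1 - m))) has_real_derivative
            ((1 - m) * x powr (1 - m - 1)) / (c * (1 - m))) (at x)"
    by (rule DERIV_cdivide[OF has_real_derivative_powr[OF True]])
  have e: "((1 - m) * x powr (1 - m - 1)) / (c * (1 - m)) = 1 / (c * \<bar>x\<bar> powr m)"
    using assms True by (simp add: powr_minus field_simps)
  show ?thesis
    by (rule has_field_derivative_transform_within_open[OF d[unfolded e], of "{0<..}"])
       (use True in \<open>auto simp: psi_def\<close>)
next
  case False
  hence x: "x < 0" using assms by auto
  have d0: "((\<lambda>y. (- y) powr (1 - m)) has_real_derivative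
            ((1 - m) * (-x) powr (1 - m - 1)) * (-1)) (at x)"
  proof -
    have p: "((\<lambda>z. z powr (1-m)) has_real_derivative (1-m) * (-x) powr (1-m-1)) (at (-x))"
      using has_real_derivative_powr[of "-x" "1-m"] x by simp
    show ?thesis using DERIV_chain2[OF p DERIV_minus[OF DERIV_ident]] .
  qed
  have d: "((\<lambda>y. - ((- y) powr (1 - m)) / (c * (1 - m))) has_real_derivative
            - (((1 - m) * (-x) powr (1 - m - 1)) * (-1)) / (c * (1 - m))) (at x)"
    by (rule DERIV_cdivide[OF DERIV_minus[OF d0]])
  have e: "- (((1 - m) * (-x) powr (1 - m - 1)) * (-1)) / (c * (1 - m)) = 1 / (c * \<bar>x\<bar> powr m)"
    using assms x by (simp add: powr_minus field_simps)
  show ?thesis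
    by (rule has_field_derivative_transform_within_open[OF d[unfolded e], of "{..<0}"])
       (use x in \<open>auto simp: psi_def\<close>)
qed

lemma psi_cont:
  assumes "c > 0" "m < 1"
  shows "isCont (psi c m) x"
proof (cases "x = 0")
  case False
  thus ?thesis using psi_deriv[OF assms False] DERIV_isCont by blast
next
  case True
  have "((\<lambda>y. psi c m y - psi c m 0) \<longlongrightarrow> 0) (at 0)"
  proof (rule Lim_null_comparison)
    show "\<forall>\<^sub>F y in at 0. norm (psi c m y - psi c m 0) \<le> \<bar>y\<bar> powr (1 - m) / (c * (1 - m))"
      using assms by (intro always_eventually allI) (auto simp: psi_def abs_divide)
    have "isCont (\<lambda>y. \<bar>y\<bar> powr (1 - m) / (c * (1 - m))) 0"
      using assms by (intro continuous_intros continuous_on_powr'[THEN continuous_on_interior]) 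
        (auto intro: continuous_intros)
    hence "((\<lambda>y. \<bar>y\<bar> powr (1 - m) / (c * (1 - m))) \<longlongrightarrow> 0) (at 0)"
      using assms unfolding isCont_def by simp
    thus "((\<lambda>y. \<bar>y\<bar> powr (1 - m) / (c * (1 - m))) \<longlongrightarrow> 0) (at 0)" .
  qed
  hence "(psi c m \<longlongrightarrow> psi c m 0) (at 0)"
    by (rule LIM_zero_cancel)
  thus ?thesis using True unfolding isCont_def by simp
qed

lemma LBINT_psi:
  fixes c m u v p :: real
  assumes "c > 0" "0 < m" "m < 1" "u \<le> v"
  shows "(LBINT \<xi>=u..v. 1 / (c * \<bar>\<xi> - p\<bar> powr m)) = psi c m (v - p) - psi c m (u - p)"
proof -
  let ?g = "\<lambda>\<xi>. 1 / (c * \<bar>\<xi> - p\<bar> powr m)"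
  have hi: "(?g has_integral (psi c m (v - p) - psi c m (u - p))) {u..v}"
  proof (rule fundamental_theorem_of_calculus_interior_strong[of "{p}"])
    show "continuous_on {u..v} (\<lambda>\<xi>. psi c m (\<xi> - p))"
      using assms by (intro continuous_at_imp_continuous_on ballI isCont_o2[OF _ psi_cont]) 
        (auto intro: continuous_intros)
    fix \<xi> assume "\<xi> \<in> {u<..<v} - {p}"
    hence "\<xi> - p \<noteq> 0" by auto
    have dg: "((\<lambda>\<xi>. \<xi> - p) has_real_derivative 1) (at \<xi>)" by (auto intro!: derivative_eq_intros)
    from DERIV_chain2[OF psi_deriv[OF assms(1,3) \<open>\<xi> - p \<noteq> 0\<close>] dg]
    show "((\<lambda>\<xi>. psi c m (\<xi> - p)) has_vector_derivative ?g \<xi>) (at \<xi>)"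
      unfolding has_real_derivative_iff_has_vector_derivative[symmetric]
      by (auto intro: derivative_eq_intros)
  qed (use assms in auto)
  have nn: "\<And>\<xi>. 0 \<le> ?g \<xi>" using assms by auto
  have ai: "?g absolutely_integrable_on {u..v}"
    using hi nn by (intro nonnegative_absolutely_integrable_1) (auto simp: integrable_on_def)
  have "set_integrable lborel {u..v} ?g"
    using ai unfolding set_integrable_def
    by (subst (asm) integrable_completion) measurable
  hence "(LBINT \<xi>=u..v. ?g \<xi>) = integral {u..v} ?g"
    using assms by (intro interval_integral_eq_integral) auto
  thus ?thesis using hi by (simp add: integral_unique)
qed



lemma grad_inner:
  fixes f :: "real^'n \<Rightarrow> real"
  assumes "(f has_derivative D) (at w)"
  shows "D v = gradient f w \<bullet> v"
proof -
  have fd: "frechet_derivative f (at w) = D" using frechet_derivative_at[OF assms] by simp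
  have lin: "linear D" using assms by (rule has_derivative_linear)
  have "D v = D (\<Sum>i\<in>UNIV. v$i *\<^sub>R axis i 1)"
    using basis_expansion[of v] by (simp add: scalar_mult_eq_scaleR)
  also have "\<dots> = (\<Sum>i\<in>UNIV. v$i * D (axis i 1))"
    using lin by (simp add: linear_sum linear_scale)
  also have "\<dots> = gradient f w \<bullet> v"
    unfolding gradient_def fd inner_vec_def by (simp add: mult.commute)
  finally show ?thesis .
qed

lemma arith_key:
  fixes a R D Hp :: real
  assumes "D > 0" "R \<ge> 0" "a \<ge> 0" "D \<le> a + R" "-Hp \<ge> 2/3 * a^2" "Hp \<le> 0"
  shows "a + 4 * (1 / D) * Hp \<le> R"
proof -
  have "a * D + 4 * Hp \<le> R * D"
  proof (cases "a \<le> R")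
    case True
    hence "a * D \<le> R * D" using assms by (intro mult_right_mono) auto
    thus ?thesis using assms by linarith
  next
    case False
    hence "D \<le> 2 * a" using assms by linarith
    hence "a * D \<le> a * (2 * a)" using assms by (intro mult_left_mono) auto
    moreover have "0 \<le> R * D" using assms by simp
    moreover have "a * (2*a) = 2*(a*a)" by simp
    moreover have "3 * (-Hp) \<ge> 2*(a*a)" using assms(5) by (simp add: power2_eq_square)
    moreover have "0 \<le> a*a" by simp
    ultimately show ?thesis by linarith
  qed
  thus ?thesis using assms by (simp add: field_simps)
qed

theorem lemma5p4:
  fixes \<Phi> :: "real^'n \<Rightarrow> real"
    and U :: "(real^'n) set"
    and z0 :: "real^'n"
    and c \<delta> \<mu> C1 c1 t' t'' :: real
    and E z z' :: "real \<Rightarrow> real^'n"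
  assumes U_open: "open U"
    and analytic: "real_analytic_on \<Phi> U"
    and z0U: "z0 \<in> U"
    and c_pos: "c > 0"
    and delta: "0 < \<delta>" "\<delta> \<le> 1"
    and mu: "1/2 \<le> \<mu>" "\<mu> < 1"
    and cball_sub: "cball z0 \<delta> \<subseteq> U"
    and loj: "\<And>w. norm (w - z0) \<le> \<delta> \<Longrightarrow>
                 norm (gradient \<Phi> w) \<ge> c * \<bar>\<Phi> w - \<Phi> z0\<bar> powr \<mu>"
    and E_cont: "continuous_on {0..} E"
    and E_bound: "C1 > 0" "c1 > 0" "\<And>t. t \<ge> 0 \<Longrightarrow> norm (E t) \<le> C1 * exp (- c1 * t)"
    and z_in_U: "\<And>t. t \<ge> 0 \<Longrightarrow> z t \<in> U"
    and z_deriv: "\<And>t. t \<ge> 0 \<Longrightarrow> (z has_vector_derivative z' t) (at t within {0..})"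
    and z'_cont: "continuous_on {0..} z'"
    and ode: "\<And>t. t \<ge> 0 \<Longrightarrow> z' t = - gradient \<Phi> (z t) + E t"
    and times: "0 \<le> t'" "t' \<le> t''"
    and in_ball: "\<And>t. t \<in> {t'..t''} \<Longrightarrow> z t \<in> ball z0 \<delta>"
  shows "let H = (\<lambda>t. \<Phi> (z t) + 3/4 * integral {t..} (\<lambda>s. (norm (E s))\<^sup>2));
             Et = (\<lambda>t. c * (3/4 * integral {t..} (\<lambda>s. (norm (E s))\<^sup>2)) powr \<mu> + norm (E t))
         in integral {t'..t''} (\<lambda>s. norm (z' s))
              \<le> 4 * (LBINT \<xi>=H t''..H t'. 1 / (c * \<bar>\<xi> - \<Phi> z0\<bar> powr \<mu>))
                + integral {t'..t''} Et"
proof -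
  define f where "f s = (norm (E s))\<^sup>2" for s
  define T where "T t = integral {t..} f" for t
  define H where "H t = \<Phi> (z t) + 3/4 * T t" for t
  define Et where "Et t = c * (3/4 * T t) powr \<mu> + norm (E t)" for t
  define b where "b = t'' + 1"
  define gr where "gr t = gradient \<Phi> (z t)" for t
  define Hd where "Hd t = gr t \<bullet> z' t - 3/4 * f t" for t
  define p0 where "p0 = \<Phi> z0"
  have mu0: "\<mu> > 0" using mu by simp
  have fcont: "continuous_on {0..} f" unfolding f_def using E_cont by (intro continuous_intros)
  have fnn: "f s \<ge> 0" for s unfolding f_def by simp
  have fint: "f integrable_on {t..}" if t: "t \<ge> 0" for t
  proof (rule measurable_bounded_by_integrable_imp_integrable_real)
    show "f \<in> borel_measurable (lebesgue_on {t..})"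
      by (rule continuous_imp_measurable_on_sets_lebesgue) 
         (use fcont t in \<open>auto intro: continuous_on_subset\<close>)
    have "(\<lambda>s. exp (-(2*c1) * s)) integrable_on {t..}"
      using has_integral_exp_minus_to_infinity[of "2*c1" t] E_bound(2) by (auto simp: integrable_on_def)
    from integrable_on_cmult_left[OF this, of "C1^2"]
    show "(\<lambda>s. C1^2 * exp (-(2*c1) * s)) integrable_on {t..}" by simp
    show "{t..} \<in> sets lebesgue" by simp
    fix s assume s: "s \<in> {t..}"
    hence s0: "s \<ge> 0" using t by simp
    have "f s \<le> (C1 * exp (- c1 * s))^2"
      unfolding f_def using E_bound(3)[OF s0] by (intro power_mono) auto
    also have "\<dots> = C1^2 * exp (-(2*c1) * s)"
      by (simp add: power_mult_distrib power2_eq_square flip: exp_add)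
    finally show "\<bar>f s\<bar> \<le> C1^2 * exp (-(2*c1) * s)" using fnn by simp
  qed
  have Tnn: "T t \<ge> 0" if "t \<ge> 0" for t
    unfolding T_def using integral_nonneg[OF fint[OF that]] fnn by auto
  define I0 where "I0 = integral {0..} f"
  have Tsplit: "T t = I0 - integral {0..t} f" if t: "t \<ge> 0" for t
  proof -
    have i1: "(f has_integral integral {0..t} f) {0..t}"
      by (intro integrable_integral integrable_continuous_interval continuous_on_subset[OF fcont]) auto
    have i2: "(f has_integral T t) {t..}" unfolding T_def by (rule integrable_integral[OF fint[OF t]])
    have "(f has_integral (integral {0..t} f + T t)) ({0..t} \<union> {t..})"
      by (rule has_integral_Un[OF i1 i2], rule negligible_subset[OF negligible_sing[of t]]) auto
    moreover have "{0..t} \<union> {t..} = {0..}" using t by auto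
    ultimately have "(f has_integral (integral {0..t} f + T t)) {0..}" by simp
    hence "I0 = integral {0..t} f + T t" unfolding I0_def by (rule integral_unique)
    thus ?thesis by simp
  qed
  have Tder: "(T has_real_derivative (- f t)) (at t within {0..b})" if t: "t \<in> {0..b}" for t
  proof -
    have "((\<lambda>u. integral {0..u} f) has_vector_derivative f t) (at t within {0..b})"
      by (rule integral_has_vector_derivative) (use fcont t in \<open>auto intro: continuous_on_subset\<close>)
    hence d: "((\<lambda>u. integral {0..u} f) has_real_derivative f t) (at t within {0..b})"
      by (simp add: has_real_derivative_iff_has_vector_derivative)
    have "((\<lambda>u. I0 - integral {0..u} f) has_real_derivative (0 - f t)) (at t within {0..b})"
      by (rule DERIV_diff[OF DERIV_const d])
    hence "((\<lambda>u. I0 - integral {0..u} f) has_vector_derivative (- f t)) (at t within {0..b})"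
      by (simp add: has_real_derivative_iff_has_vector_derivative)
    hence "(T has_vector_derivative (- f t)) (at t within {0..b})"
      by (rule has_vector_derivative_transform[rotated -1]) (use t Tsplit in auto)
    thus ?thesis by (simp add: has_real_derivative_iff_has_vector_derivative)
  qed
  have \<Phi>d: "(\<Phi> has_derivative frechet_derivative \<Phi> (at w)) (at w)" if "w \<in> U" for w
    using analytic_differentiable[OF analytic that] frechet_derivative_works by blast
  have Hder: "(H has_real_derivative Hd t) (at t within {0..b})" if t: "t \<in> {0..b}" for t
  proof -
    have t0: "t \<ge> 0" using t by simp
    have zd: "(z has_vector_derivative z' t) (at t within {0..b})"
      using z_deriv[OF t0] by (rule has_vector_derivative_within_subset) auto
    have "((\<Phi> \<circ> z) has_vector_derivative frechet_derivative \<Phi> (at (z t)) (z' t)) (at t within {0..b})"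
      by (rule vector_derivative_diff_chain_within[OF zd has_derivative_at_withinI[OF \<Phi>d[OF z_in_U[OF t0]]]])
    moreover have "frechet_derivative \<Phi> (at (z t)) (z' t) = gr t \<bullet> z' t"
      unfolding gr_def by (rule grad_inner[OF \<Phi>d[OF z_in_U[OF t0]]])
    ultimately have d1: "((\<lambda>t. \<Phi> (z t)) has_real_derivative gr t \<bullet> z' t) (at t within {0..b})"
      by (simp add: o_def has_real_derivative_iff_has_vector_derivative)
    have "((\<lambda>t. \<Phi> (z t) + 3/4 * T t) has_real_derivative (gr t \<bullet> z' t + 3/4 * (- f t))) (at t within {0..b})"
      by (rule DERIV_add[OF d1 DERIV_cmult[OF Tder[OF t]]])
    moreover have "gr t \<bullet> z' t + 3/4 * (- f t) = Hd t" unfolding Hd_def by simp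
    ultimately show ?thesis unfolding H_def by simp
  qed
  have Hcont: "continuous_on {0..b} H"
    using Hder DERIV_continuous continuous_on_eq_continuous_within by blast
  have Tcont: "continuous_on {0..b} T"
    using Tder DERIV_continuous continuous_on_eq_continuous_within by blast
  have tb: "{t'..t''} \<subseteq> {0..b}" using times unfolding b_def by auto
  have pw: "norm (z' t) \<le> norm (gr t) + norm (E t) \<and> -Hd t \<ge> 2/3 * (norm (gr t))^2 \<and> Hd t \<le> 0 \<and>
            c * \<bar>H t - p0\<bar> powr \<mu> \<le> norm (gr t) + c * (3/4 * T t) powr \<mu>"
    if t: "t \<in> {t'..t''}" for t
  proof -
    have t0: "t \<ge> 0" using t times by simp
    define a where "a = norm (gr t)"
    define e where "e = norm (E t)"
    have zt: "z' t = - gr t + E t" unfolding gr_def using ode[OF t0] .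
    have Hde: "Hd t = -(a^2) + gr t \<bullet> E t - 3/4 * e^2"
      unfolding Hd_def zt f_def a_def e_def by (simp add: inner_add_right inner_diff_right power2_norm_eq_inner)
    have cs: "\<bar>gr t \<bullet> E t\<bar> \<le> a * e" unfolding a_def e_def by (rule Cauchy_Schwarz_ineq2)
    have sq: "0 \<le> (2*a - 3*e)^2" by simp
    hence sq': "0 \<le> 4*(a*a) - 12*(a*e) + 9*(e*e)" by (simp add: power2_eq_square algebra_simps)
    have c1: "-Hd t \<ge> 2/3 * a^2"
      using Hde cs sq' by (simp add: power2_eq_square abs_le_iff) 
    have c2: "Hd t \<le> 0" using c1 by (simp add: power2_eq_square) (smt (verit) zero_le_square)
    have c3: "norm (z' t) \<le> a + e"
      unfolding zt a_def e_def by (metis norm_minus_cancel norm_triangle_ineq)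
    have nz: "norm (z t - z0) \<le> \<delta>"
      using in_ball[OF t] by (simp add: dist_norm norm_minus_commute)
    have l: "c * \<bar>\<Phi> (z t) - p0\<bar> powr \<mu> \<le> a" unfolding a_def gr_def p0_def by (rule loj[OF nz])
    have "\<bar>H t - p0\<bar> \<le> \<bar>\<Phi> (z t) - p0\<bar> + 3/4 * T t"
      unfolding H_def using Tnn[OF t0] by linarith
    hence "\<bar>H t - p0\<bar> powr \<mu> \<le> (\<bar>\<Phi> (z t) - p0\<bar> + 3/4 * T t) powr \<mu>"
      using mu0 by (intro powr_mono2) auto
    also have "\<dots> \<le> \<bar>\<Phi> (z t) - p0\<bar> powr \<mu> + (3/4 * T t) powr \<mu>"
      using mu Tnn[OF t0] by (intro powr_subadd) auto
    finally have "c * \<bar>H t - p0\<bar> powr \<mu> \<le> c * (\<bar>\<Phi> (z t) - p0\<bar> powr \<mu> + (3/4 * T t) powr \<mu>)"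
      using c_pos by (intro mult_left_mono) auto
    hence c4: "c * \<bar>H t - p0\<bar> powr \<mu> \<le> a + c * (3/4 * T t) powr \<mu>"
      using l by (simp add: distrib_left)
    show ?thesis using c1 c2 c3 c4 unfolding a_def e_def by blast
  qed
  have mono: "H v \<le> H u" if uv: "t' \<le> u" "u \<le> v" "v \<le> t''" for u v
  proof -
    have "(Hd has_integral (H v - H u)) {u..v}"
    proof (rule fundamental_theorem_of_calculus[OF uv(2)])
      fix x assume x: "x \<in> {u..v}"
      hence "x \<in> {0..b}" using uv tb by auto
      from Hder[OF this] have "(H has_real_derivative Hd x) (at x within {u..v})"
        by (rule DERIV_subset) (use uv tb in auto)
      thus "(H has_vector_derivative Hd x) (at x within {u..v})"
        by (simp add: has_real_derivative_iff_has_vector_derivative)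
    qed
    moreover have "((\<lambda>_. 0) has_integral 0) {u..v}" by simp
    ultimately have "H v - H u \<le> 0"
      by (rule has_integral_le) (use pw uv in auto)
    thus ?thesis by simp
  qed
  have psicont: "continuous_on UNIV (psi c \<mu>)"
    using psi_cont[OF c_pos mu(2)] by (intro continuous_at_imp_continuous_on) auto
  define P where "P t = 4 * psi c \<mu> (H t - p0)" for t
  have Pcont: "continuous_on {t'..t''} P"
  proof -
    have "continuous_on {t'..t''} (\<lambda>t. H t - p0)"
      using continuous_on_subset[OF Hcont tb] by (intro continuous_intros)
    hence "continuous_on {t'..t''} (\<lambda>t. psi c \<mu> (H t - p0))"
      by (rule continuous_on_compose2[OF psicont]) auto
    thus ?thesis unfolding P_def by (intro continuous_intros)
  qed
  define K where "K = {t \<in> {t'..t''}. H t = p0}"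
  define S where "S = {Inf K, Sup K, t', t''}"
  have finS: "finite S" unfolding S_def by simp
  have Hat: "(H has_real_derivative Hd x) (at x)" if x: "x \<in> {t'<..<t''}" for x
  proof -
    have "x \<in> interior {0..b}" using x times unfolding b_def by auto
    hence "at x within {0..b} = at x" by (rule at_within_interior)
    with Hder[of x] x tb show ?thesis by auto
  qed
  have flat: "Hd x = 0 \<and> (P has_real_derivative 0) (at x)"
    if x: "x \<in> {t'<..<t''} - S" and Hx: "H x = p0" for x
  proof -
    have xK: "x \<in> K" using x Hx unfolding K_def by auto
    have Kne: "K \<noteq> {}" using xK by auto
    have bb: "bdd_below K" "bdd_above K" unfolding K_def by (auto intro: bdd_belowI bdd_aboveI)
    have "Inf K \<le> x" "x \<le> Sup K" using xK bb by (auto intro: cInf_lower cSup_upper)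
    moreover have "x \<noteq> Inf K" "x \<noteq> Sup K" using x unfolding S_def by auto
    ultimately have "Inf K < x" "x < Sup K" by auto
    then obtain k1 k2 where k1: "k1 \<in> K" "k1 < x" and k2: "k2 \<in> K" "x < k2"
      using cInf_less_iff[OF Kne bb(1)] less_cSup_iff[OF Kne bb(2)] by blast
    have const: "H s = p0" if "s \<in> {k1<..<k2}" for s
    proof -
      have "H s \<le> H k1" using mono[of k1 s] k1 k2 that unfolding K_def by auto
      moreover have "H k2 \<le> H s" using mono[of s k2] k1 k2 that unfolding K_def by auto
      ultimately show ?thesis using k1 k2 unfolding K_def by auto
    qed
    have xo: "x \<in> {k1<..<k2}" using k1 k2 by auto
    have "(H has_real_derivative 0) (at x)"
      by (rule has_field_derivative_transform_within_open[OF DERIV_const[of p0] _ xo]) (use const in auto)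
    hence "Hd x = 0" using Hat[of x] x DERIV_unique by blast
    moreover have "(P has_real_derivative 0) (at x)"
      by (rule has_field_derivative_transform_within_open[OF DERIV_const[of 0] _ xo])
         (use const in \<open>auto simp: P_def psi_def\<close>)
    ultimately show ?thesis by simp
  qed
  define P' where "P' t = (if t \<in> S then Et t - norm (z' t) else if H t = p0 then 0
                            else 4 * (1 / (c * \<bar>H t - p0\<bar> powr \<mu>)) * Hd t)" for t
  have Pder: "(P has_real_derivative P' x) (at x)" if x: "x \<in> {t'<..<t''} - S" for x
  proof (cases "H x = p0")
    case True
    thus ?thesis using flat[OF x True] x unfolding P'_def by auto
  next
    case False
    hence ne: "H x - p0 \<noteq> 0" by simp
    have d0: "((\<lambda>t. H t - p0) has_real_derivative Hd x - 0) (at x)"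
      by (rule DERIV_diff[OF Hat DERIV_const]) (use x in auto)
    have "((\<lambda>t. psi c \<mu> (H t - p0)) has_real_derivative 1 / (c * \<bar>H x - p0\<bar> powr \<mu>) * (Hd x - 0)) (at x)"
      by (rule DERIV_chain2[OF psi_deriv[OF c_pos mu(2) ne] d0])
    from DERIV_cmult[OF this, of 4]
    show ?thesis using False x unfolding P'_def P_def by (simp add: mult.assoc)
  qed
  have Pineq: "P' t \<le> Et t - norm (z' t)" if t: "t \<in> {t'..t''}" for t
  proof (cases "t \<in> S")
    case True thus ?thesis unfolding P'_def by simp
  next
    case notS: False
    hence ti: "t \<in> {t'<..<t''} - S" using t unfolding S_def by auto
    have t0: "t \<ge> 0" using t times by simp
    have Rnn: "c * (3/4 * T t) powr \<mu> \<ge> 0" using c_pos by simp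
    note pwt = pw[OF t]
    show ?thesis
    proof (cases "H t = p0")
      case True
      have "Hd t = 0" using flat[OF ti True] by simp
      hence "(norm (gr t))^2 \<le> 0" using pwt by simp
      hence "norm (gr t) = 0" by simp
      hence "norm (z' t) \<le> norm (E t)" using pwt by simp
      thus ?thesis using True notS Rnn unfolding P'_def Et_def by simp
    next
      case False
      have D0: "c * \<bar>H t - p0\<bar> powr \<mu> > 0" using False c_pos by simp
      have "norm (gr t) + 4 * (1 / (c * \<bar>H t - p0\<bar> powr \<mu>)) * Hd t \<le> c * (3/4 * T t) powr \<mu>"
        by (rule arith_key[OF D0 Rnn]) (use pwt in auto)
      thus ?thesis using False notS pwt unfolding P'_def Et_def by simp
    qed
  qed
  have FTC: "(P' has_integral (P t'' - P t')) {t'..t''}"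
  proof (rule fundamental_theorem_of_calculus_interior_strong[OF finS times(2) _ Pcont])
    fix x assume "x \<in> {t'<..<t''} - S"
    from Pder[OF this] show "(P has_vector_derivative P' x) (at x)"
      by (simp only: has_real_derivative_iff_has_vector_derivative)
  qed
  have Etcont: "continuous_on {t'..t''} Et"
  proof -
    have c34: "continuous_on {t'..t''} (\<lambda>t. 3/4 * T t)"
      using continuous_on_subset[OF Tcont tb] by (intro continuous_intros)
    have "\<forall>x\<in>{t'..t''}. 3/4 * T x \<ge> 0 \<and> (3/4 * T x = 0 \<longrightarrow> \<mu> > 0)"
      using Tnn times mu0 by auto
    from continuous_on_powr'[OF c34 continuous_on_const this]
    have "continuous_on {t'..t''} (\<lambda>t. (3/4 * T t) powr \<mu>)" .
    moreover have "continuous_on {t'..t''} E" by (rule continuous_on_subset[OF E_cont]) (use times in auto)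
    ultimately show ?thesis unfolding Et_def
      by (rule continuous_on_add[OF continuous_on_mult[OF continuous_on_const] continuous_on_norm])
  qed
  have z'cont: "continuous_on {t'..t''} (\<lambda>s. norm (z' s))"
  proof -
    have "continuous_on {t'..t''} z'" by (rule continuous_on_subset[OF z'_cont]) (use times in auto)
    thus ?thesis by (intro continuous_intros)
  qed
  have ints: "((\<lambda>t. Et t - norm (z' t)) has_integral
      (integral {t'..t''} Et - integral {t'..t''} (\<lambda>s. norm (z' s)))) {t'..t''}"
    by (intro has_integral_diff integrable_integral integrable_continuous_interval Etcont z'cont)
  have main: "P t'' - P t' \<le> integral {t'..t''} Et - integral {t'..t''} (\<lambda>s. norm (z' s))"
    by (rule has_integral_le[OF FTC ints]) (use Pineq in auto)
  have Hmono: "H t'' \<le> H t'" using mono[of t' t''] times by auto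
  have LB: "(LBINT \<xi>=H t''..H t'. 1 / (c * \<bar>\<xi> - p0\<bar> powr \<mu>)) = psi c \<mu> (H t' - p0) - psi c \<mu> (H t'' - p0)"
    by (rule LBINT_psi[OF c_pos mu0 mu(2) Hmono])
  have final: "integral {t'..t''} (\<lambda>s. norm (z' s))
              \<le> 4 * (LBINT \<xi>=H t''..H t'. 1 / (c * \<bar>\<xi> - p0\<bar> powr \<mu>)) + integral {t'..t''} Et"
    using main unfolding LB P_def by simp
  show ?thesis using final unfolding H_def Et_def T_def f_def p0_def Let_def .
qed

end
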